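(* $\mathrm{Tv}(\mathbb{Z} \times \mathbb{R}^k,m) = 2(m-1)(k+1) +1$.
   Context: For $S\subseteq\mathbb{R}^d$ and an integer $m\geq 2$, the Tverberg number $\mathrm{Tv}(S,m)$ is the smallest positive integer $n$ such that any multiset of $n$ points in $S$ admits a partition into $m$ submultisets $A_1,\dots,A_m$ with $\left(\bigcap_{i=1}^m\mathrm{conv}(A_i)\right)\cap S\neq\varnothing$ (and $\mathrm{Tv}(S,m)=\infty$ if no such number exists). Here $k$ is a positive integer and $m\geq 2$. *)

theory Defs
  imports "HOL-Analysis.Analysis" "HOL-Library.Extended_Nat"
begin

text \<open>A multiset of n points of S is represented as an indexed family x 0, ..., x (n-1)
  (repetitions allowed). A partition into m submultisets is an assignment f of each index
  to a part f i < m; part j is the submultiset of points with index in f^{-1}(j).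
  The convex hull of a multiset is the convex hull of its underlying set.\<close>

definition tverberg_prop :: "'a::real_vector set \<Rightarrow> nat \<Rightarrow> nat \<Rightarrow> bool" where
  "tverberg_prop S m n \<longleftrightarrow>
     (\<forall>x :: nat \<Rightarrow> 'a. (\<forall>i<n. x i \<in> S) \<longrightarrow>
        (\<exists>f :: nat \<Rightarrow> nat. (\<forall>i<n. f i < m) \<and>
           (\<Inter>j<m. convex hull (x ` {i. i < n \<and> f i = j})) \<inter> S \<noteq> {}))"

definition Tv :: "'a::real_vector set \<Rightarrow> nat \<Rightarrow> enat" where
  "Tv S m = (if \<exists>n>0. tverberg_prop S m n
             then enat (LEAST n. n > 0 \<and> tverberg_prop S m n) else \<infinity>)"

end

theory Submission
  imports Defs "HOL-Library.Function_Algebras"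
begin

lemma sum_fun_apply: "finite A \<Longrightarrow> (sum f A) x = sum (\<lambda>a. f a x) A"
  by (induction A rule: finite_induct) auto

definition sc :: "real \<Rightarrow> (nat \<Rightarrow> 'v::real_vector) \<Rightarrow> (nat \<Rightarrow> 'v)" where
  "sc c F = (\<lambda>l. c *\<^sub>R F l)"

interpretation FV: vector_space "sc :: real \<Rightarrow> (nat \<Rightarrow> 'v::real_vector) \<Rightarrow> _"
  by unfold_locales (auto simp: sc_def fun_eq_iff scaleR_add_right scaleR_add_left)


definition ev :: "nat \<Rightarrow> 'v::real_vector \<Rightarrow> nat \<Rightarrow> 'v" where
  "ev j b = (\<lambda>l. if l = j then b else 0)"

lemma sc_sum_apply: "finite A \<Longrightarrow> (\<Sum>a\<in>A. sc (c a) (F a)) l = (\<Sum>a\<in>A. c a *\<^sub>R F a l)"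
  by (simp add: sum_fun_apply sc_def)

lemma W_in_span:
  fixes F :: "nat \<Rightarrow> 'v::euclidean_space"
  assumes "\<forall>l\<ge>M. F l = 0"
  shows "F \<in> FV.span ((\<lambda>(j,b). ev j b) ` ({..<M} \<times> Basis))"
proof -
  have eq: "F = (\<Sum>p\<in>{..<M} \<times> Basis. sc (F (fst p) \<bullet> snd p) (ev (fst p) (snd p)))"
  proof
    fix l
    have "(\<Sum>p\<in>{..<M} \<times> Basis. sc (F (fst p) \<bullet> snd p) (ev (fst p) (snd p))) l
        = (\<Sum>p\<in>{..<M} \<times> Basis. (F (fst p) \<bullet> snd p) *\<^sub>R ev (fst p) (snd p) l)"
      by (simp add: sc_sum_apply)
    also have "\<dots> = (\<Sum>j<M. \<Sum>b\<in>Basis. (F j \<bullet> b) *\<^sub>R ev j b l)"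
      by (simp add: sum.cartesian_product split_def)
    also have "\<dots> = F l"
    proof (cases "l < M")
      case True
      have "(\<Sum>j<M. \<Sum>b\<in>Basis. (F j \<bullet> b) *\<^sub>R ev j b l) = (\<Sum>j\<in>{l}. \<Sum>b\<in>Basis. (F j \<bullet> b) *\<^sub>R ev j b l)"
        by (rule sum.mono_neutral_right) (auto simp: ev_def True)
      also have "\<dots> = F l" by (simp add: ev_def euclidean_representation)
      finally show ?thesis .
    next
      case False
      then show ?thesis using assms by (auto simp: ev_def)
    qed
    finally show "F l = (\<Sum>p\<in>{..<M} \<times> Basis. sc (F (fst p) \<bullet> snd p) (ev (fst p) (snd p))) l" by simp
  qed
  show ?thesis
    apply (subst eq)
    apply (rule FV.span_sum)
    apply (rule FV.span_scale)
    apply (rule FV.span_base)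
    by force
qed

lemma fam_dependent:
  fixes u :: "nat \<Rightarrow> nat \<Rightarrow> 'v::euclidean_space"
  assumes W: "\<forall>i<n. \<forall>l\<ge>M. u i l = 0" and n: "n > M * DIM('v)"
  shows "\<exists>c. (\<exists>i<n. c i \<noteq> 0) \<and> (\<forall>l. (\<Sum>i<n. c i *\<^sub>R u i l) = 0)"
proof (cases "inj_on u {..<n}")
  case False
  then obtain i i' where ii: "i < n" "i' < n" "i \<noteq> i'" "u i = u i'"
    unfolding inj_on_def by auto
  define c where "c = (\<lambda>r. if r = i then 1 else if r = i' then -1 else (0::real))"
  have "(\<Sum>r<n. c r *\<^sub>R u r l) = 0" for l
  proof -
    have "(\<Sum>r<n. c r *\<^sub>R u r l) = (\<Sum>r\<in>{i,i'}. c r *\<^sub>R u r l)"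
      by (rule sum.mono_neutral_right) (auto simp: c_def ii)
    also have "\<dots> = 0" using ii by (simp add: c_def)
    finally show ?thesis .
  qed
  moreover have "c i \<noteq> 0" by (simp add: c_def)
  ultimately show ?thesis using ii by blast
next
  case True
  define T :: "(nat \<Rightarrow> 'v) set" where "T = (\<lambda>(j,b). ev j b) ` ({..<M} \<times> Basis)"
  have fT: "finite T" by (simp add: T_def)
  have cT: "card T \<le> M * DIM('v)"
    unfolding T_def by (metis card_image_le card_cartesian_product card_lessThan finite_Basis finite_SigmaI finite_lessThan)
  have sub: "u ` {..<n} \<subseteq> FV.span T"
    using W W_in_span unfolding T_def by blast
  have cu: "card (u ` {..<n}) = n" using True by (simp add: card_image)
  have "FV.dependent (u ` {..<n})"
  proof (rule ccontr)
    assume "\<not> FV.dependent (u ` {..<n})"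
    from FV.independent_span_bound[OF fT this sub] cu cT n show False by simp
  qed
  then obtain t c where t: "finite t" "t \<subseteq> u ` {..<n}" "(\<Sum>v\<in>t. sc (c v) v) = 0" "\<exists>v\<in>t. c v \<noteq> 0"
    unfolding FV.dependent_explicit by blast
  define c' where "c' = (\<lambda>i. if u i \<in> t then c (u i) else 0)"
  have "(\<Sum>i<n. c' i *\<^sub>R u i l) = 0" for l
  proof -
    have "(\<Sum>i<n. c' i *\<^sub>R u i l) = (\<Sum>i\<in>{i. i<n \<and> u i \<in> t}. c (u i) *\<^sub>R u i l)"
      by (rule sum.mono_neutral_cong_right) (auto simp: c'_def)
    also have "\<dots> = (\<Sum>v\<in>u ` {i. i<n \<and> u i \<in> t}. c v *\<^sub>R v l)"
      by (rule sum.reindex[symmetric, unfolded comp_def]) (rule inj_on_subset[OF True], auto)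
    also have "u ` {i. i<n \<and> u i \<in> t} = t" using t(2) by auto
    also have "(\<Sum>v\<in>t. c v *\<^sub>R v l) = (\<Sum>v\<in>t. sc (c v) v) l" by (simp add: sc_sum_apply t(1))
    also have "\<dots> = 0" using t(3) by simp
    finally show ?thesis .
  qed
  moreover obtain v where "v \<in> t" "c v \<noteq> 0" using t(4) by blast
  then obtain i where "i < n" "u i = v" using t(2) by auto
  then have "c' i \<noteq> 0" using \<open>v \<in> t\<close> \<open>c v \<noteq> 0\<close> by (simp add: c'_def)
  ultimately show ?thesis using \<open>i < n\<close> by blast
qed


definition ip :: "nat \<Rightarrow> (nat \<Rightarrow> 'v::real_inner) \<Rightarrow> (nat \<Rightarrow> 'v) \<Rightarrow> real" where
  "ip M F G = (\<Sum>l<M. F l \<bullet> G l)"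

definition comb :: "(nat \<Rightarrow> nat \<Rightarrow> nat \<Rightarrow> 'v::real_vector) \<Rightarrow> nat \<Rightarrow> (nat \<Rightarrow> real) \<Rightarrow> (nat \<Rightarrow> nat) \<Rightarrow> nat \<Rightarrow> 'v" where
  "comb v N w \<sigma> = (\<lambda>l. \<Sum>i<N. w i *\<^sub>R v i (\<sigma> i) l)"

definition Simp :: "nat \<Rightarrow> (nat \<Rightarrow> real) set" where
  "Simp N = {w. (\<forall>i. 0 \<le> w i) \<and> (\<forall>i\<ge>N. w i = 0) \<and> sum w {..<N} = 1}"

lemma ip_nonneg: "ip M F F \<ge> 0"
  unfolding ip_def by (intro sum_nonneg) auto

lemma ip_pos: "l < M \<Longrightarrow> F l \<noteq> 0 \<Longrightarrow> ip M F F > 0"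
  unfolding ip_def
  by (rule sum_pos2[of _ l]) auto

lemma ip_lin:
  assumes "finite I"
  shows "ip M q (\<lambda>l. \<Sum>i\<in>I. c i *\<^sub>R G i l) = (\<Sum>i\<in>I. c i * ip M q (G i))"
  unfolding ip_def
  by (simp add: inner_sum_right sum_distrib_left assms sum.swap[of _ I])

lemma inner_expand1:
  fixes a d :: "'v::real_inner"
  shows "(a + e *\<^sub>R d) \<bullet> (a + e *\<^sub>R d) = a \<bullet> a + e * (2 * (a \<bullet> d) + e * (d \<bullet> d))"
proof -
  have "(a + e *\<^sub>R d) \<bullet> (a + e *\<^sub>R d) = a \<bullet> a + e * (a \<bullet> d) + e * (d \<bullet> a) + e * e * (d \<bullet> d)"
    by (simp add: inner_add_left inner_add_right algebra_simps)
  also have "d \<bullet> a = a \<bullet> d" by (rule inner_commute)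
  finally show ?thesis by (simp add: algebra_simps)
qed

lemma ip_expand:
  "ip M (\<lambda>l. q l + e *\<^sub>R (t l - q l)) (\<lambda>l. q l + e *\<^sub>R (t l - q l))
     = ip M q q + e * (2 * (ip M q t - ip M q q) + e * ip M (\<lambda>l. t l - q l) (\<lambda>l. t l - q l))"
proof -
  have "\<And>l. (q l + e *\<^sub>R (t l - q l)) \<bullet> (q l + e *\<^sub>R (t l - q l))
      = q l \<bullet> q l + (2 * e) * (q l \<bullet> t l - q l \<bullet> q l) + (e * e) * ((t l - q l) \<bullet> (t l - q l))"
    unfolding inner_expand1 inner_diff_right[of "q l" "t l" "q l" for l] by (simp add: algebra_simps)
  then have "ip M (\<lambda>l. q l + e *\<^sub>R (t l - q l)) (\<lambda>l. q l + e *\<^sub>R (t l - q l))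
     = ip M q q + (2 * e) * (ip M q t - ip M q q) + (e * e) * ip M (\<lambda>l. t l - q l) (\<lambda>l. t l - q l)"
    unfolding ip_def by (simp only: sum.distrib sum_subtractf flip: sum_distrib_left)
  then show ?thesis by (simp add: algebra_simps)
qed

lemma Simp_compact: "compact (Simp N)"
proof -
  define B :: "(nat \<Rightarrow> real) set" where "B = PiE UNIV (\<lambda>i. if i < N then {0..1} else {0})"
  have "compactin (product_topology (\<lambda>i. euclidean) UNIV) B"
    unfolding B_def by (subst compactin_PiE) auto
  then have cB: "compact B" by (simp add: euclidean_product_topology)
  have cl: "closed {w::nat\<Rightarrow>real. sum w {..<N} = 1}"
    by (rule closed_Collect_eq) (intro continuous_intros continuous_on_product_coordinates)+
  have "Simp N = B \<inter> {w. sum w {..<N} = 1}"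
  proof (intro set_eqI iffI)
    fix w assume w: "w \<in> Simp N"
    have "w i \<le> 1" if "i < N" for i
    proof -
      have "w i \<le> sum w {..<N}" by (rule member_le_sum) (use w that in \<open>auto simp: Simp_def\<close>)
      then show ?thesis using w by (simp add: Simp_def)
    qed
    then have "w \<in> B" unfolding B_def
      by (intro PiE_I) (use w in \<open>auto simp: Simp_def\<close>)
    moreover have "sum w {..<N} = 1" using w by (simp add: Simp_def)
    ultimately show "w \<in> B \<inter> {w. sum w {..<N} = 1}" by (intro IntI CollectI)
  next
    fix w assume wBS: "w \<in> B \<inter> {w. sum w {..<N} = 1}"
    then have wB: "w \<in> B" and ws: "sum w {..<N} = 1" by auto
    have wi: "w i \<in> (if i < N then {0..1} else {0})" for i
      using PiE_mem[OF wB[unfolded B_def] UNIV_I] .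
    have "0 \<le> w i" for i using wi[of i] by (cases "i < N") auto
    moreover have "w i = 0" if "i \<ge> N" for i using wi[of i] that by auto
    ultimately show "w \<in> Simp N" unfolding Simp_def using ws by blast
  qed
  then show ?thesis using cB cl by auto
qed

lemma Simp_ne: "N > 0 \<Longrightarrow> (\<lambda>i. if i = 0 then 1 else 0) \<in> Simp N"
  unfolding Simp_def by (auto simp: sum.delta)

lemma Phi_cont: "continuous_on S (\<lambda>w. ip M (comb v N w \<sigma>) (comb v N w \<sigma>))"
  unfolding ip_def comb_def
  by (intro continuous_on_sum continuous_on_inner continuous_on_scaleR continuous_on_const
      continuous_on_subset[OF continuous_on_product_coordinates] subset_UNIV)


lemma ip_diff: "ip M q (\<lambda>l. F l - G l) = ip M q F - ip M q G"
  unfolding ip_def by (simp add: inner_diff_right sum_subtractf)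

definition Adm :: "nat \<Rightarrow> nat \<Rightarrow> (nat \<Rightarrow> nat) set" where
  "Adm N m = PiE {..<N} (\<lambda>_. {..<m})"

definition isMin where
  "isMin v N m M \<sigma> w \<longleftrightarrow> \<sigma> \<in> Adm N m \<and> w \<in> Simp N \<and>
     (\<forall>\<sigma>'\<in>Adm N m. \<forall>w'\<in>Simp N. ip M (comb v N w \<sigma>) (comb v N w \<sigma>) \<le> ip M (comb v N w' \<sigma>') (comb v N w' \<sigma>'))"

lemma exists_min:
  fixes v :: "nat \<Rightarrow> nat \<Rightarrow> nat \<Rightarrow> 'v::euclidean_space"
  assumes "N > 0" "m > 0"
  shows "\<exists>\<sigma> w. isMin v N m M \<sigma> w"
proof -
  let ?P = "\<lambda>\<sigma> w. ip M (comb v N w \<sigma>) (comb v N w \<sigma>)"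
  have "\<exists>w\<in>Simp N. \<forall>w'\<in>Simp N. ?P \<sigma> w \<le> ?P \<sigma> w'" for \<sigma>
    using continuous_attains_inf[OF Simp_compact, of N "?P \<sigma>"] Simp_ne[OF assms(1)] Phi_cont
    by blast
  then obtain g where g: "\<And>\<sigma>. g \<sigma> \<in> Simp N \<and> (\<forall>w'\<in>Simp N. ?P \<sigma> (g \<sigma>) \<le> ?P \<sigma> w')"
    by metis
  have fA: "finite (Adm N m)" unfolding Adm_def by (rule finite_PiE) auto
  have neA: "Adm N m \<noteq> {}" unfolding Adm_def PiE_eq_empty_iff using assms by auto
  define mu where "mu = Min ((\<lambda>\<sigma>. ?P \<sigma> (g \<sigma>)) ` Adm N m)"
  have "mu \<in> (\<lambda>\<sigma>. ?P \<sigma> (g \<sigma>)) ` Adm N m" unfolding mu_def using fA neA by (intro Min_in) auto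
  then obtain \<sigma>0 where s0: "\<sigma>0 \<in> Adm N m" "mu = ?P \<sigma>0 (g \<sigma>0)" by blast
  have "\<forall>\<sigma>'\<in>Adm N m. \<forall>w'\<in>Simp N. ?P \<sigma>0 (g \<sigma>0) \<le> ?P \<sigma>' w'"
  proof (intro ballI)
    fix \<sigma>' w' assume a: "\<sigma>' \<in> Adm N m" "w' \<in> Simp N"
    have "mu \<le> ?P \<sigma>' (g \<sigma>')" unfolding mu_def using fA a by (intro Min_le) auto
    also have "\<dots> \<le> ?P \<sigma>' w'" using g a by blast
    finally show "?P \<sigma>0 (g \<sigma>0) \<le> ?P \<sigma>' w'" using s0 by simp
  qed
  then have "isMin v N m M \<sigma>0 (g \<sigma>0)" unfolding isMin_def using s0 g by blast
  then show ?thesis by blast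
qed

lemma first_order:
  fixes v :: "nat \<Rightarrow> nat \<Rightarrow> nat \<Rightarrow> 'v::euclidean_space"
  assumes mn: "isMin v N m M \<sigma> w" and i: "i < N"
  shows "ip M (comb v N w \<sigma>) (v i (\<sigma> i)) \<ge> ip M (comb v N w \<sigma>) (comb v N w \<sigma>)"
proof (rule ccontr)
  define q where "q = comb v N w \<sigma>"
  define t where "t = v i (\<sigma> i)"
  assume "\<not> ?thesis"
  then have a: "ip M q q - ip M q t > 0" unfolding q_def t_def by simp
  define a where "a = ip M q q - ip M q t"
  define b where "b = ip M (\<lambda>l. t l - q l) (\<lambda>l. t l - q l)"
  have b0: "b \<ge> 0" unfolding b_def by (rule ip_nonneg)
  define e where "e = (if b = 0 then 1 else min 1 (a / b))"
  have a0: "a > 0" using a a_def by simp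
  have e0: "e > 0" "e \<le> 1" using a0 b0 by (auto simp: e_def)
  have eb: "e * b \<le> a"
  proof (cases "b = 0")
    case True then show ?thesis using a0 by simp
  next
    case False
    then have "e \<le> a / b" by (simp add: e_def)
    then show ?thesis using False b0 by (simp add: pos_le_divide_eq mult.commute)
  qed
  define w' where "w' = (\<lambda>r. (1 - e) * w r + e * (if r = i then 1 else 0))"
  have wS: "w \<in> Simp N" and sA: "\<sigma> \<in> Adm N m" using mn by (auto simp: isMin_def)
  have "w' \<in> Simp N"
  proof -
    have "\<forall>r. 0 \<le> w' r" using wS e0 by (auto simp: Simp_def w'_def)
    moreover have "\<forall>r\<ge>N. w' r = 0" using wS i by (auto simp: Simp_def w'_def)
    moreover have "sum w' {..<N} = 1"
      using wS i by (simp add: Simp_def w'_def sum.distrib sum_distrib_left[symmetric] sum.delta)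
    ultimately show ?thesis by (simp add: Simp_def)
  qed
  have cw': "comb v N w' \<sigma> = (\<lambda>l. q l + e *\<^sub>R (t l - q l))"
  proof
    fix l
    have "comb v N w' \<sigma> l = (1 - e) *\<^sub>R q l + (\<Sum>r<N. (e * (if r = i then 1 else 0)) *\<^sub>R v r (\<sigma> r) l)"
      unfolding comb_def w'_def q_def by (simp add: scaleR_add_left sum.distrib scaleR_sum_right)
    also have "(\<Sum>r<N. (e * (if r = i then 1 else 0)) *\<^sub>R v r (\<sigma> r) l) = e *\<^sub>R t l"
      using i by (simp add: t_def if_distrib[of "\<lambda>x. (e * x) *\<^sub>R _"] sum.delta cong: if_cong)
    finally show "comb v N w' \<sigma> l = q l + e *\<^sub>R (t l - q l)" by (simp add: algebra_simps)
  qed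
  have "ip M (comb v N w' \<sigma>) (comb v N w' \<sigma>) = ip M q q + e * (2 * (- a) + e * b)"
    unfolding cw' ip_expand a_def b_def by simp
  also have "\<dots> < ip M q q"
  proof -
    have "e * (2 * (- a) + e * b) \<le> e * (- a)" using eb e0 by (intro mult_left_mono) auto
    also have "\<dots> < 0" using e0 a0 by (simp add: mult_pos_pos)
    finally show ?thesis by simp
  qed
  finally have "ip M (comb v N w' \<sigma>) (comb v N w' \<sigma>) < ip M q q" .
  moreover have "ip M q q \<le> ip M (comb v N w' \<sigma>) (comb v N w' \<sigma>)"
    using mn \<open>w' \<in> Simp N\<close> sA unfolding isMin_def q_def by blast
  ultimately show False by simp
qed


lemma comb_W:
  assumes "\<sigma> \<in> Adm N m" "\<forall>i<N. \<forall>j<m. \<forall>l\<ge>M. v i j l = 0" "l \<ge> M"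
  shows "comb v N w \<sigma> l = 0"
proof -
  have "\<forall>r<N. \<sigma> r < m" using assms(1) by (auto simp: Adm_def PiE_iff)
  then show ?thesis unfolding comb_def using assms(2,3) by (simp add: sum.neutral)
qed

lemma reduce:
  fixes v :: "nat \<Rightarrow> nat \<Rightarrow> nat \<Rightarrow> 'v::euclidean_space"
  assumes mn: "isMin v N m M \<sigma> w"
    and Nbig: "N > M * DIM('v)"
    and vW: "\<forall>i<N. \<forall>j<m. \<forall>l\<ge>M. v i j l = 0"
    and qpos: "ip M (comb v N w \<sigma>) (comb v N w \<sigma>) > 0"
  shows "\<exists>w'\<in>Simp N. comb v N w' \<sigma> = comb v N w \<sigma> \<and> (\<exists>i<N. w' i = 0)"
proof (cases "\<exists>i<N. w i = 0")
  case True
  then show ?thesis using mn by (auto simp: isMin_def)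
next
  case False
  define q where "q = comb v N w \<sigma>"
  define t where "t = (\<lambda>i. v i (\<sigma> i))"
  have wS: "w \<in> Simp N" and sA: "\<sigma> \<in> Adm N m" using mn by (auto simp: isMin_def)
  have N0: "N > 0" using Nbig by simp
  have wpos: "\<forall>i<N. w i > 0" using False wS by (auto simp: Simp_def order_le_less)
  have hq: "\<forall>i<N. ip M q (t i) \<ge> ip M q q" using first_order[OF mn] unfolding q_def t_def by blast
  have "ip M q q = ip M q (\<lambda>l. \<Sum>i<N. w i *\<^sub>R t i l)" unfolding q_def comb_def t_def ..
  also have "\<dots> = (\<Sum>i<N. w i * ip M q (t i))" by (rule ip_lin) simp
  finally have s1: "ip M q q = (\<Sum>i<N. w i * ip M q (t i))" .
  have "(\<Sum>i<N. w i * (ip M q (t i) - ip M q q)) = (\<Sum>i<N. w i * ip M q (t i)) - (\<Sum>i<N. w i) * ip M q q"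
    by (simp add: right_diff_distrib sum_subtractf sum_distrib_right)
  also have "\<dots> = 0" using s1 wS by (simp add: Simp_def)
  finally have "(\<Sum>i<N. w i * (ip M q (t i) - ip M q q)) = 0" .
  moreover have "\<forall>i\<in>{..<N}. 0 \<le> w i * (ip M q (t i) - ip M q q)"
  proof
    fix i assume "i \<in> {..<N}"
    then have "w i \<ge> 0" "ip M q (t i) - ip M q q \<ge> 0" using hq wpos by (simp_all add: less_imp_le)
    then show "0 \<le> w i * (ip M q (t i) - ip M q q)" by (rule mult_nonneg_nonneg)
  qed
  ultimately have "\<forall>i\<in>{..<N}. w i * (ip M q (t i) - ip M q q) = 0"
    using sum_nonneg_eq_0_iff[of "{..<N}" "\<lambda>i. w i * (ip M q (t i) - ip M q q)"] by (simp only: finite_lessThan)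
  then have eqt: "\<forall>i<N. ip M q (t i) = ip M q q" using wpos by (metis lessThan_iff mult_eq_0_iff order_less_irrefl right_minus_eq)
  define u where "u = (\<lambda>i. if i = 0 then q else (\<lambda>l. t i l - t 0 l))"
  have uW: "\<forall>i<N. \<forall>l\<ge>M. u i l = 0"
  proof (intro allI impI)
    fix i l assume "i < N" "M \<le> l"
    have "\<forall>r<N. \<sigma> r < m" using sA by (auto simp: Adm_def PiE_iff)
    then show "u i l = 0" using \<open>i < N\<close> \<open>M \<le> l\<close> vW N0 comb_W[OF sA vW \<open>M \<le> l\<close>]
      by (auto simp: u_def t_def q_def)
  qed
  obtain c where c: "\<exists>i<N. c i \<noteq> 0" "\<forall>l. (\<Sum>i<N. c i *\<^sub>R u i l) = 0"
    using fam_dependent[OF uW Nbig] by blast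
  have "0 = ip M q (\<lambda>l. \<Sum>i<N. c i *\<^sub>R u i l)" using c(2) by (simp add: ip_def)
  also have "\<dots> = (\<Sum>i<N. c i * ip M q (u i))" by (rule ip_lin) simp
  also have "\<dots> = (\<Sum>i<N. c i * (if i = 0 then ip M q q else 0))"
    by (rule sum.cong) (auto simp: u_def ip_diff eqt N0)
  also have "\<dots> = c 0 * ip M q q" using N0 by (simp add: if_distrib sum.delta cong: if_cong)
  finally have c0: "c 0 = 0" using qpos q_def by simp
  define mu where "mu = (\<lambda>i. (if i < N then c i else 0) - (if i = 0 then (\<Sum>r<N. c r) else 0))"
  have mu_sum: "(\<Sum>i<N. mu i) = 0"
    using N0 by (simp add: mu_def sum_subtractf sum.delta)
  have mu_comb: "(\<Sum>i<N. mu i *\<^sub>R t i l) = 0" for l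
  proof -
    have "(\<Sum>i<N. mu i *\<^sub>R t i l) = (\<Sum>i<N. c i *\<^sub>R t i l) - (\<Sum>r<N. c r) *\<^sub>R t 0 l"
      using N0 by (simp add: mu_def scaleR_diff_left sum_subtractf if_distrib[of "\<lambda>x. x *\<^sub>R _"] sum.delta cong: if_cong)
    also have "\<dots> = (\<Sum>i<N. c i *\<^sub>R (t i l - t 0 l))"
      by (simp add: scaleR_diff_right sum_subtractf scaleR_sum_left)
    also have "\<dots> = (\<Sum>i<N. c i *\<^sub>R u i l)"
      by (rule sum.cong) (auto simp: u_def c0)
    also have "\<dots> = 0" using c(2) by simp
    finally show ?thesis .
  qed
  have mu_nz: "\<exists>i<N. mu i \<noteq> 0"
  proof -
    obtain i where "i < N" "c i \<noteq> 0" using c(1) by blast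
    have "i \<noteq> 0"
    proof
      assume "i = 0"
      then show False using c0 \<open>c i \<noteq> 0\<close> by simp
    qed
    then have "mu i = c i" using \<open>i < N\<close> by (simp add: mu_def)
    then show ?thesis using \<open>i < N\<close> \<open>c i \<noteq> 0\<close> by metis
  qed
  have mu_out: "\<forall>i\<ge>N. mu i = 0" using N0 by (auto simp: mu_def)
  have neg: "\<exists>i<N. mu i < 0"
  proof (rule ccontr)
    assume "\<not> ?thesis"
    then have "\<forall>i\<in>{..<N}. 0 \<le> mu i" by auto
    then have "\<forall>i\<in>{..<N}. mu i = 0" using mu_sum sum_nonneg_eq_0_iff[of "{..<N}" mu] by (simp only: finite_lessThan)
    then show False using mu_nz by auto
  qed
  define I where "I = {i. i < N \<and> mu i < 0}"
  define f where "f = (\<lambda>i. w i / (- mu i))"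
  define s where "s = Min (f ` I)"
  have fI: "finite I" "I \<noteq> {}" using neg by (auto simp: I_def)
  have "s \<in> f ` I" unfolding s_def using fI by (intro Min_in) auto
  then obtain i0 where i0: "i0 \<in> I" "s = f i0" by blast
  have sle: "\<forall>i\<in>I. s \<le> f i" unfolding s_def using fI by auto
  have s0: "s \<ge> 0"
  proof -
    have "w i0 \<ge> 0" "- mu i0 > 0" using i0 wS by (auto simp: I_def Simp_def)
    then show ?thesis using i0(2) unfolding f_def using divide_nonneg_pos by metis
  qed
  define w' where "w' = (\<lambda>i. w i + s * mu i)"
  have "w' \<in> Simp N"
  proof -
    have "0 \<le> w' i" for i
    proof (cases "i < N")
      case True
      show ?thesis
      proof (cases "mu i < 0")
        case True
        then have "i \<in> I" using \<open>i < N\<close> by (simp add: I_def)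
        then have "s \<le> w i / (- mu i)" using sle by (auto simp: f_def)
        then have "s * (- mu i) \<le> w i" using True by (metis neg_0_less_iff_less pos_le_divide_eq)
        then show ?thesis by (simp add: w'_def)
      next
        case False
        then show ?thesis using s0 wS by (auto simp: w'_def Simp_def)
      qed
    next
      case False
      then show ?thesis using wS mu_out by (auto simp: w'_def Simp_def)
    qed
    moreover have "\<forall>i\<ge>N. w' i = 0" using wS mu_out by (auto simp: w'_def Simp_def)
    moreover have "sum w' {..<N} = 1"
      using wS mu_sum by (simp add: w'_def sum.distrib Simp_def sum_distrib_left[symmetric])
    ultimately show ?thesis by (simp add: Simp_def)
  qed
  moreover have "comb v N w' \<sigma> = q"
  proof
    fix l
    have "comb v N w' \<sigma> l = q l + s *\<^sub>R (\<Sum>i<N. mu i *\<^sub>R t i l)"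
      unfolding comb_def w'_def q_def t_def
      by (simp add: scaleR_add_left sum.distrib scaleR_sum_right)
    then show "comb v N w' \<sigma> l = q l" using mu_comb by simp
  qed
  moreover have "w' i0 = 0" using i0 by (simp add: w'_def f_def I_def)
  moreover have "i0 < N" using i0 by (simp add: I_def)
  ultimately show ?thesis unfolding q_def by blast
qed


lemma colorful:
  fixes v :: "nat \<Rightarrow> nat \<Rightarrow> nat \<Rightarrow> 'v::euclidean_space"
  assumes Nbig: "N > M * DIM('v)"
    and vW: "\<forall>i<N. \<forall>j<m. \<forall>l\<ge>M. v i j l = 0"
    and vz: "\<forall>i<N. \<forall>l. (\<Sum>j<m. v i j l) = 0"
    and m0: "m > 0"
  shows "\<exists>\<sigma>\<in>Adm N m. \<exists>w\<in>Simp N. \<forall>l<M. comb v N w \<sigma> l = 0"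
proof -
  have N0: "N > 0" using Nbig by simp
  obtain \<sigma> w where mn: "isMin v N m M \<sigma> w" using exists_min[OF N0 m0] by blast
  define q where "q = comb v N w \<sigma>"
  show ?thesis
  proof (cases "\<forall>l<M. q l = 0")
    case True
    then show ?thesis using mn unfolding q_def isMin_def by blast
  next
    case False
    then obtain l0 where l0: "l0 < M" "q l0 \<noteq> 0" by blast
    have qpos: "ip M q q > 0" by (rule ip_pos[of l0 M q, OF l0])
    obtain w' i where w': "w' \<in> Simp N" "comb v N w' \<sigma> = q" "i < N" "w' i = 0"
      using reduce[OF mn Nbig vW qpos[unfolded q_def]] unfolding q_def by blast
    have sA: "\<sigma> \<in> Adm N m" using mn by (simp add: isMin_def)
    have mn': "isMin v N m M \<sigma> w'" using mn w' unfolding isMin_def q_def by simp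
    have "(\<Sum>j<m. ip M q (v i j)) = ip M q (\<lambda>l. \<Sum>j<m. 1 *\<^sub>R v i j l)"
      using ip_lin[of "{..<m}" M q "\<lambda>_. 1" "v i"] by simp
    also have "\<dots> = 0" using vz \<open>i < N\<close> by (simp add: ip_def)
    finally have s0: "(\<Sum>j<m. ip M q (v i j)) = 0" .
    have "\<exists>j<m. ip M q (v i j) \<le> 0"
    proof (rule ccontr)
      assume "\<not> ?thesis"
      then have "\<forall>j\<in>{..<m}. ip M q (v i j) > 0" by auto
      then have "(\<Sum>j<m. ip M q (v i j)) > 0" using m0 by (intro sum_pos) auto
      then show False using s0 by simp
    qed
    then obtain j where j: "j < m" "ip M q (v i j) \<le> 0" by blast
    define \<sigma>' where "\<sigma>' = \<sigma>(i := j)"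
    have sA': "\<sigma>' \<in> Adm N m" using sA j \<open>i < N\<close> by (auto simp: Adm_def PiE_iff \<sigma>'_def extensional_def)
    have "comb v N w' \<sigma>' = comb v N w' \<sigma>"
    proof
      fix l
      show "comb v N w' \<sigma>' l = comb v N w' \<sigma> l"
        unfolding comb_def by (rule sum.cong) (auto simp: \<sigma>'_def w'(4))
    qed
    then have cq: "comb v N w' \<sigma>' = q" using w' by simp
    have mn'': "isMin v N m M \<sigma>' w'" using mn' sA' cq w' unfolding isMin_def by simp
    have "ip M q (v i (\<sigma>' i)) \<ge> ip M q q" using first_order[OF mn'' \<open>i < N\<close>] cq by simp
    then have "ip M q (v i j) \<ge> ip M q q" by (simp add: \<sigma>'_def)
    then show ?thesis using j qpos by simp
  qed
qed


lemma tverberg: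
  fixes y :: "nat \<Rightarrow> 'a::euclidean_space" and m :: nat
  assumes m1: "m \<ge> 1"
  defines "N \<equiv> (m - 1) * (DIM('a) + 1) + 1"
  shows "\<exists>f. (\<forall>i<N. f i < m) \<and> (\<exists>p. \<forall>j<m. p \<in> convex hull (y ` {i. i < N \<and> f i = j}))"
proof -
  define M where "M = m - 1"
  have mM: "m = Suc M" using m1 by (simp add: M_def)
  define yh where "yh = (\<lambda>i. (y i, 1::real))"
  define v :: "nat \<Rightarrow> nat \<Rightarrow> nat \<Rightarrow> 'a \<times> real" where
    "v = (\<lambda>i j l. if j < M then (if l = j then yh i else 0) else (if l < M then - yh i else 0))"
  have Nbig: "N > M * DIM('a \<times> real)" by (simp add: N_def M_def)
  have vW: "\<forall>i<N. \<forall>j<m. \<forall>l\<ge>M. v i j l = 0" by (auto simp: v_def)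
  have vz: "\<forall>i<N. \<forall>l. (\<Sum>j<m. v i j l) = 0"
  proof (intro allI impI)
    fix i l
    have "(\<Sum>j<m. v i j l) = (\<Sum>j<M. v i j l) + v i M l" by (simp add: mM)
    also have "(\<Sum>j<M. v i j l) = (\<Sum>j<M. if l = j then yh i else 0)"
      by (rule sum.cong) (auto simp: v_def)
    also have "\<dots> = (if l < M then yh i else 0)" by (simp add: sum.delta eq_commute[of l])
    finally show "(\<Sum>j<m. v i j l) = 0" by (simp add: v_def)
  qed
  obtain \<sigma> w where s: "\<sigma> \<in> Adm N m" and wS: "w \<in> Simp N" and c0: "\<forall>l<M. comb v N w \<sigma> l = 0"
    using colorful[OF Nbig vW vz] m1 by auto
  have sm: "\<forall>i<N. \<sigma> i < m" using s by (auto simp: Adm_def PiE_iff)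
  define Wc where "Wc = (\<lambda>j. \<Sum>i<N. (if \<sigma> i = j then w i else 0) *\<^sub>R yh i)"
  have WcM: "Wc l = Wc M" if "l < M" for l
  proof -
    have "comb v N w \<sigma> l = (\<Sum>i<N. (if \<sigma> i = l then w i else 0) *\<^sub>R yh i - (if \<sigma> i = M then w i else 0) *\<^sub>R yh i)"
      unfolding comb_def
    proof (rule sum.cong)
      fix i assume "i \<in> {..<N}"
      then have "\<sigma> i < Suc M" using sm mM by auto
      then show "w i *\<^sub>R v i (\<sigma> i) l = (if \<sigma> i = l then w i else 0) *\<^sub>R yh i - (if \<sigma> i = M then w i else 0) *\<^sub>R yh i"
        using that by (auto simp: v_def)
    qed simp
    also have "\<dots> = Wc l - Wc M" unfolding Wc_def by (simp add: sum_subtractf)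
    finally show ?thesis using c0 that by simp
  qed
  have WcM': "Wc j = Wc M" if "j < m" for j
  proof (cases "j < M")
    case True then show ?thesis using WcM by blast
  next
    case False
    then have "j = M" using that mM by simp
    then show ?thesis by simp
  qed
  define La where "La = (\<lambda>j. snd (Wc j))"
  have La_eq: "La j = (\<Sum>i<N. if \<sigma> i = j then w i else 0)" for j
    unfolding La_def Wc_def by (simp add: snd_sum yh_def)
  have "(\<Sum>j<m. La j) = (\<Sum>i<N. \<Sum>j<m. if \<sigma> i = j then w i else 0)"
    unfolding La_eq by (rule sum.swap)
  also have "\<dots> = (\<Sum>i<N. w i)"
    by (rule sum.cong) (use sm in \<open>auto simp: sum.delta eq_commute[of "\<sigma> _"]\<close>)
  also have "\<dots> = 1" using wS by (simp add: Simp_def)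
  finally have "(\<Sum>j<m. La j) = 1" .
  moreover have "(\<Sum>j<m. La j) = (\<Sum>j<m. La M)" using WcM' by (simp add: La_def)
  ultimately have mLa: "real m * La M = 1" by simp
  have mpos: "real m > 0" using m1 by simp
  have "La M = 1 / real m" using mLa mpos by (simp add: field_simps)
  then have Lpos: "La M > 0" using mpos by simp
  define p where "p = (1 / La M) *\<^sub>R fst (Wc M)"
  have "p \<in> convex hull (y ` {i. i < N \<and> \<sigma> i = j})" if j: "j < m" for j
  proof -
    define P where "P = {i. i < N \<and> \<sigma> i = j}"
    have fP: "finite P" by (simp add: P_def)
    have "fst (Wc j) = (\<Sum>i<N. (if \<sigma> i = j then w i else 0) *\<^sub>R y i)"
      unfolding Wc_def by (simp add: fst_sum yh_def)
    also have "\<dots> = (\<Sum>i\<in>P. w i *\<^sub>R y i)"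
      unfolding P_def by (rule sum.mono_neutral_cong_right) auto
    finally have fW: "fst (Wc j) = (\<Sum>i\<in>P. w i *\<^sub>R y i)" .
    have "La j = (\<Sum>i\<in>P. w i)"
      unfolding La_eq P_def by (rule sum.mono_neutral_cong_right) auto
    then have sP: "(\<Sum>i\<in>P. w i) = La M" using WcM'[OF j] by (simp add: La_def)
    have "p = (\<Sum>i\<in>P. (w i / La M) *\<^sub>R y i)"
      unfolding p_def WcM'[OF j, symmetric] fW by (simp add: scaleR_sum_right)
    also have "\<dots> \<in> convex hull (y ` P)"
    proof (rule convex_sum[OF fP convex_convex_hull])
      show "(\<Sum>i\<in>P. w i / La M) = 1" using sP Lpos by (simp add: sum_divide_distrib[symmetric])
      show "0 \<le> w i / La M" if "i \<in> P" for i using wS Lpos by (simp add: Simp_def)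
      show "y i \<in> convex hull (y ` P)" if "i \<in> P" for i using that by (simp add: hull_inc)
    qed
    finally show ?thesis by (simp add: P_def)
  qed
  then show ?thesis using sm by blast
qed


definition cross :: "real \<times> 'a::real_vector \<Rightarrow> real \<times> 'a \<Rightarrow> real \<Rightarrow> 'a" where
  "cross a b z = (if fst a = fst b then snd a else snd a + ((z - fst a) / (fst b - fst a)) *\<^sub>R (snd b - snd a))"

lemma cross_in:
  fixes a b :: "real \<times> 'a::real_vector"
  assumes "fst a \<le> z" "z \<le> fst b"
  shows "\<exists>u. 0 \<le> u \<and> u \<le> 1 \<and> (z, cross a b z) = (1 - u) *\<^sub>R a + u *\<^sub>R b"
proof (cases "fst a = fst b")
  case True
  then have "z = fst a" using assms by simp
  then show ?thesis using True by (intro exI[of _ 0]) (simp add: cross_def prod_eq_iff)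
next
  case False
  then have d: "fst b - fst a > 0" using assms by simp
  define u where "u = (z - fst a) / (fst b - fst a)"
  have u01: "0 \<le> u" "u \<le> 1" using assms d by (auto simp: u_def divide_simps)
  have "fst ((1 - u) *\<^sub>R a + u *\<^sub>R b) = fst a + u * (fst b - fst a)" by (simp add: algebra_simps)
  also have "\<dots> = z" using d by (simp add: u_def)
  finally have f: "fst ((1 - u) *\<^sub>R a + u *\<^sub>R b) = z" .
  have s: "snd ((1 - u) *\<^sub>R a + u *\<^sub>R b) = cross a b z"
    using False by (simp add: cross_def u_def[symmetric] algebra_simps)
  show ?thesis using u01 f s by (intro exI[of _ u]) (simp add: prod_eq_iff)
qed

lemma upper_bound:
  fixes m :: nat
  assumes m2: "m \<ge> 2"
  shows "tverberg_prop {p :: real \<times> (real ^ 'k). fst p \<in> \<int>} m (2 * (m - 1) * (CARD('k) + 1) + 1)"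
  unfolding tverberg_prop_def
proof (intro allI impI)
  define S where "S = {p :: real \<times> (real ^ 'k). fst p \<in> \<int>}"
  define N where "N = (m - 1) * (DIM(real ^ 'k) + 1) + 1"
  define n where "n = 2 * (m - 1) * (CARD('k) + 1) + 1"
  have nN: "n = 2 * (N - 1) + 1" by (simp add: N_def n_def)
  fix x :: "nat \<Rightarrow> real \<times> (real ^ 'k)"
  assume xS: "\<forall>i<2 * (m - 1) * (CARD('k) + 1) + 1. x i \<in> {p. fst p \<in> \<int>}"
  then have xS: "\<forall>i<n. fst (x i) \<in> \<int>" by (simp add: n_def)
  define L where "L = sort_key (\<lambda>i. fst (x i)) [0..<n]"
  have lenL: "length L = n" by (simp add: L_def)
  have setL: "set L = {..<n}" by (auto simp: L_def)
  have distL: "distinct L" by (simp add: L_def)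
  have sortL: "sorted (map (\<lambda>i. fst (x i)) L)" by (simp add: L_def)
  have Lin: "L ! s < n" if "s < n" for s using setL lenL that nth_mem by fastforce
  have mono: "fst (x (L ! s)) \<le> fst (x (L ! s'))" if "s \<le> s'" "s' < n" for s s'
    using sorted_nth_mono[OF sortL, of s s'] that lenL by simp
  have injL: "inj_on ((!) L) {..<n}" using distL lenL by (simp add: inj_on_def nth_eq_iff_index_eq)
  have surjL: "(!) L ` {..<n} = {..<n}" using setL lenL by (metis atLeast_upt set_map map_nth lessThan_atLeast0)
  define z where "z = fst (x (L ! (N - 1)))"
  have N1: "N \<ge> 1" by (simp add: N_def)
  have zZ: "z \<in> \<int>" using xS Lin[of "N - 1"] nN N1 by (simp add: z_def)
  define c where "c = (\<lambda>i. cross (x (L ! i)) (x (L ! (n - 1 - i))) z)"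
  define h where "h = (\<lambda>s. min s (n - 1 - s))"
  obtain g p where g: "\<forall>i<N. g i < m" and p: "\<forall>j<m. p \<in> convex hull (c ` {i. i < N \<and> g i = j})"
    using tverberg[of m c] m2 unfolding N_def by auto
  define f where "f = (\<lambda>r. g (h (inv_into {..<n} ((!) L) r)))"
  have fL: "f (L ! s) = g (h s)" if "s < n" for s
    using that injL by (simp add: f_def inv_into_f_f)
  have hN: "h s < N" if "s < n" for s using that nN N1 by (auto simp: h_def min_def)
  have frange: "\<forall>r<n. f r < m"
  proof (intro allI impI)
    fix r assume "r < n"
    then have "r \<in> (!) L ` {..<n}" using surjL by auto
    then obtain s where "s < n" "r = L ! s" by auto
    then show "f r < m" using fL g hN by simp
  qed
  have "(z, p) \<in> convex hull (x ` {r. r < n \<and> f r = j})" if j: "j < m" for j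
  proof -
    define X where "X = convex hull (x ` {r. r < n \<and> f r = j})"
    define Q where "Q = {q. (z, q) \<in> X}"
    have cQ: "convex Q"
    proof (rule convexI)
      fix q1 q2 u1 u2 assume "q1 \<in> Q" "q2 \<in> Q" "0 \<le> u1" "0 \<le> u2" "u1 + u2 = (1::real)"
      then have "u1 *\<^sub>R (z, q1) + u2 *\<^sub>R (z, q2) \<in> X"
        unfolding Q_def X_def by (intro convexD[OF convex_convex_hull]) auto
      moreover have "u1 *\<^sub>R (z, q1) + u2 *\<^sub>R (z, q2) = (z, u1 *\<^sub>R q1 + u2 *\<^sub>R q2)"
        using \<open>u1 + u2 = 1\<close> by (simp add: algebra_simps flip: distrib_right)
      ultimately show "u1 *\<^sub>R q1 + u2 *\<^sub>R q2 \<in> Q" by (simp add: Q_def)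
    qed
    have "c i \<in> Q" if i: "i < N" "g i = j" for i
    proof -
      have i1: "i < n" "n - 1 - i < n" using i nN by auto
      have hi: "h i = i" "h (n - 1 - i) = i" using i nN by (auto simp: h_def)
      have a: "x (L ! i) \<in> X" unfolding X_def
        by (rule hull_inc) (use i1 fL hi i Lin in auto)
      have b: "x (L ! (n - 1 - i)) \<in> X" unfolding X_def
        by (rule hull_inc) (use i1 fL hi i Lin in \<open>auto intro!: imageI\<close>)
      have "fst (x (L ! i)) \<le> z" unfolding z_def by (rule mono) (use i nN in auto)
      moreover have "z \<le> fst (x (L ! (n - 1 - i)))" unfolding z_def by (rule mono) (use i nN in auto)
      ultimately obtain u where u: "0 \<le> u" "u \<le> 1" "(z, c i) = (1 - u) *\<^sub>R x (L ! i) + u *\<^sub>R x (L ! (n - 1 - i))"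
        using cross_in unfolding c_def by blast
      have "(1 - u) *\<^sub>R x (L ! i) + u *\<^sub>R x (L ! (n - 1 - i)) \<in> X"
        unfolding X_def by (rule convexD[OF convex_convex_hull]) (use a b u in \<open>auto simp: X_def\<close>)
      then show ?thesis using u(3) by (simp add: Q_def)
    qed
    then have "c ` {i. i < N \<and> g i = j} \<subseteq> Q" by auto
    then have "convex hull (c ` {i. i < N \<and> g i = j}) \<subseteq> Q" using cQ by (simp add: hull_minimal)
    then show ?thesis using p j by (auto simp: Q_def X_def)
  qed
  moreover have "(z, p) \<in> S" using zZ by (simp add: S_def)
  ultimately have "(z, p) \<in> (\<Inter>j<m. convex hull (x ` {r. r < n \<and> f r = j})) \<inter> S" by auto
  then show "\<exists>f. (\<forall>i<2 * (m - 1) * (CARD('k) + 1) + 1. f i < m) \<and>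
         (\<Inter>j<m. convex hull (x ` {i. i < 2 * (m - 1) * (CARD('k) + 1) + 1 \<and> f i = j})) \<inter> {p. fst p \<in> \<int>} \<noteq> {}"
    using frange unfolding n_def S_def by blast
qed


definition vert :: "'k option \<Rightarrow> real ^ 'k" where
  "vert o' = (\<chi> b. if o' = Some b then 1 else 0)"

definition lam :: "'k option \<Rightarrow> real ^ 'k \<Rightarrow> real" where
  "lam o' q = (case o' of None \<Rightarrow> 1 - (\<Sum>b\<in>UNIV. q $ b) | Some a \<Rightarrow> q $ a)"

lemma lam_vert: "lam o1 (vert o2) = (if o1 = o2 then 1 else 0)"
proof (cases o1)
  case None
  show ?thesis
  proof (cases o2)
    case None then show ?thesis using \<open>o1 = None\<close> by (simp add: lam_def vert_def)
  next
    case (Some a)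
    have "(\<Sum>b\<in>UNIV. (if Some a = Some b then 1 else 0::real)) = 1" by (simp add: sum.delta)
    then show ?thesis using \<open>o1 = None\<close> Some by (simp add: lam_def vert_def)
  qed
next
  case (Some a)
  then show ?thesis by (cases o2) (auto simp: lam_def vert_def)
qed

lemma lam_affine: "u + v = 1 \<Longrightarrow> lam o' (u *\<^sub>R q + v *\<^sub>R q') = u * lam o' q + v * lam o' q'"
proof (cases o')
  case None
  assume uv: "u + v = 1"
  have "1 - (\<Sum>b\<in>UNIV. (u *\<^sub>R q + v *\<^sub>R q') $ b) = (u + v) - (u * (\<Sum>b\<in>UNIV. q $ b) + v * (\<Sum>b\<in>UNIV. q' $ b))"
    using uv by (simp add: sum.distrib sum_distrib_left)
  then show ?thesis using None by (simp add: lam_def algebra_simps)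
qed (simp add: lam_def)

lemma lam_sum: "(\<Sum>o'\<in>UNIV. lam o' q) = 1"
proof -
  have "(\<Sum>o'\<in>UNIV. lam o' q) = lam None q + (\<Sum>o'\<in>Some ` UNIV. lam o' q)"
    by (simp add: UNIV_option_conv sum.insert_if)
  also have "(\<Sum>o'\<in>Some ` UNIV. lam o' q) = (\<Sum>b\<in>UNIV. lam (Some b) q)"
    by (rule sum.reindex[unfolded comp_def]) simp
  finally show ?thesis by (simp add: lam_def)
qed

lemma card_option_UNIV: "card (UNIV :: 'k::finite option set) = CARD('k) + 1"
  by (simp add: UNIV_option_conv card_image)

lemma lower_bound:
  fixes m :: nat
  assumes m2: "m \<ge> 2"
  shows "\<not> tverberg_prop {p :: real \<times> (real ^ 'k). fst p \<in> \<int>} m (2 * (m - 1) * (CARD('k) + 1))"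
proof
  define n0 where "n0 = 2 * (m - 1) * (CARD('k) + 1)"
  define T where "T = (UNIV :: bool set) \<times> (UNIV :: 'k option set) \<times> {..<m - 1}"
  have fT: "finite T" by (simp add: T_def)
  have cT: "card T = n0"
    by (simp add: T_def n0_def card_cartesian_product card_option_UNIV)
  obtain G where G: "bij_betw G {0..<n0} T" using ex_bij_betw_nat_finite[OF fT] cT by auto
  define x :: "nat \<Rightarrow> real \<times> (real ^ 'k)" where
    "x = (\<lambda>r. (if fst (G r) then 1 else 0, vert (fst (snd (G r)))))"
  assume tp: "tverberg_prop {p :: real \<times> (real ^ 'k). fst p \<in> \<int>} m (2 * (m - 1) * (CARD('k) + 1))"
  have "\<forall>i<n0. x i \<in> {p :: real \<times> (real ^ 'k). fst p \<in> \<int>}" by (simp add: x_def)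
  then obtain f where f: "\<forall>i<n0. f i < m"
    and ne: "(\<Inter>j<m. convex hull (x ` {i. i < n0 \<and> f i = j})) \<inter> {p. fst p \<in> \<int>} \<noteq> {}"
    using tp unfolding tverberg_prop_def n0_def by blast
  then obtain P where P: "\<forall>j<m. P \<in> convex hull (x ` {i. i < n0 \<and> f i = j})" "fst P \<in> \<int>" by blast
  define t where "t = fst P"
  have H01: "convex {p :: real \<times> (real ^ 'k). 0 \<le> fst p \<and> fst p \<le> 1}"
  proof (rule convexI)
    fix p1 p2 :: "real \<times> (real ^ 'k)" and u1 u2 :: real
    assume a: "p1 \<in> {p. 0 \<le> fst p \<and> fst p \<le> 1}" "p2 \<in> {p. 0 \<le> fst p \<and> fst p \<le> 1}" "0 \<le> u1" "0 \<le> u2" "u1 + u2 = 1"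
    have "u1 * fst p1 + u2 * fst p2 \<le> u1 * 1 + u2 * 1"
      using a by (intro add_mono mult_left_mono) auto
    then show "u1 *\<^sub>R p1 + u2 *\<^sub>R p2 \<in> {p. 0 \<le> fst p \<and> fst p \<le> 1}" using a by simp
  qed
  have "x ` {i. i < n0 \<and> f i = 0} \<subseteq> {p. 0 \<le> fst p \<and> fst p \<le> 1}" by (auto simp: x_def)
  then have "convex hull (x ` {i. i < n0 \<and> f i = 0}) \<subseteq> {p. 0 \<le> fst p \<and> fst p \<le> 1}"
    using H01 by (simp add: hull_minimal)
  moreover have "P \<in> convex hull (x ` {i. i < n0 \<and> f i = 0})" using P(1) m2 by simp
  ultimately have t01: "0 \<le> t" "t \<le> 1" unfolding t_def by auto
  obtain ti where ti: "t = real_of_int ti" using P(2) t_def Ints_cases by metis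
  have t01': "t = 0 \<or> t = 1" using t01 ti by auto
  define L0 where "L0 = (t = 1)"
  have tL0: "(if L0 then t - 1 else - t) = 0" using t01' by (auto simp: L0_def)
  have key: "lam o' (snd P) \<le> 0" for o'
  proof -
    define R where "R = {r \<in> {0..<n0}. fst (G r) = L0 \<and> fst (snd (G r)) = o'}"
    have "G ` R \<subseteq> {L0} \<times> {o'} \<times> {..<m - 1}"
    proof
      fix y assume "y \<in> G ` R"
      then obtain r where r: "r \<in> R" "y = G r" by auto
      then have "G r \<in> T" using bij_betw_apply[OF G] by (simp add: R_def)
      then have "snd (snd (G r)) < m - 1" by (auto simp: T_def)
      then show "y \<in> {L0} \<times> {o'} \<times> {..<m - 1}" using r by (auto simp: R_def mem_Times_iff)
    qed
    moreover have "inj_on G R" using G by (auto simp: R_def bij_betw_def intro: inj_on_subset)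
    ultimately have "card R \<le> m - 1"
    proof -
      assume sub: "G ` R \<subseteq> {L0} \<times> {o'} \<times> {..<m - 1}" and inj: "inj_on G R"
      have "card R = card (G ` R)" using inj by (simp add: card_image)
      also have "\<dots> \<le> card ({L0} \<times> {o'} \<times> {..<m - 1})" by (rule card_mono[OF _ sub]) simp
      also have "\<dots> = m - 1" by (simp add: card_cartesian_product)
      finally show ?thesis .
    qed
    then have "card (f ` R) < m" using card_image_le[of R f] m2 by (simp add: R_def)
    moreover have "finite (f ` R)" by (simp add: R_def)
    ultimately have "\<not> {..<m} \<subseteq> f ` R" using card_mono[of "f ` R" "{..<m}"] by auto
    then obtain j where j: "j < m" "j \<notin> f ` R" by auto
    define psi where "psi = (\<lambda>p :: real \<times> (real ^ 'k). lam o' (snd p) + (if L0 then fst p - 1 else - fst p))"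
    have cpsi: "convex {p. psi p \<le> 0}"
    proof (rule convexI)
      fix p1 p2 :: "real \<times> (real ^ 'k)" and u1 u2 :: real
      assume a: "p1 \<in> {p. psi p \<le> 0}" "p2 \<in> {p. psi p \<le> 0}" "0 \<le> u1" "0 \<le> u2" "u1 + u2 = 1"
      have "psi (u1 *\<^sub>R p1 + u2 *\<^sub>R p2) = u1 * psi p1 + u2 * psi p2"
        using a(5) unfolding psi_def by (simp add: lam_affine algebra_simps flip: distrib_right)
      also have "\<dots> \<le> 0" using a by (simp add: mult_nonneg_nonpos add_nonpos_nonpos)
      finally show "u1 *\<^sub>R p1 + u2 *\<^sub>R p2 \<in> {p. psi p \<le> 0}" by simp
    qed
    have "x ` {i. i < n0 \<and> f i = j} \<subseteq> {p. psi p \<le> 0}"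
    proof
      fix p assume "p \<in> x ` {i. i < n0 \<and> f i = j}"
      then obtain r where r: "r < n0" "f r = j" "p = x r" by auto
      have "r \<notin> R" using r j by auto
      then have nR: "fst (G r) = L0 \<Longrightarrow> fst (snd (G r)) \<noteq> o'" using r by (auto simp: R_def)
      have l1: "lam o' (vert (fst (snd (G r)))) \<le> 1" by (simp add: lam_vert)
      show "p \<in> {p. psi p \<le> 0}"
      proof (cases "fst (G r) = L0")
        case True
        then have "lam o' (vert (fst (snd (G r)))) = 0" using nR by (auto simp: lam_vert)
        then show ?thesis using True r(3) by (auto simp: psi_def x_def)
      next
        case False
        then show ?thesis using l1 r(3) by (auto simp: psi_def x_def)
      qed
    qed
    then have "convex hull (x ` {i. i < n0 \<and> f i = j}) \<subseteq> {p. psi p \<le> 0}"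
      using cpsi by (simp add: hull_minimal)
    then have "psi P \<le> 0" using P(1) j by auto
    then show ?thesis using tL0 unfolding psi_def t_def by linarith
  qed
  have "(\<Sum>o'\<in>UNIV. lam o' (snd P)) \<le> 0" by (rule sum_nonpos) (simp add: key)
  then show False using lam_sum[of "snd P"] by simp
qed

lemma tv_mono:
  assumes "tverberg_prop S m n" "n \<le> n'" "m > 0"
  shows "tverberg_prop S m n'"
  unfolding tverberg_prop_def
proof (intro allI impI)
  fix x assume x: "\<forall>i<n'. x i \<in> S"
  then have "\<forall>i<n. x i \<in> S" using assms(2) by auto
  then obtain f where f: "\<forall>i<n. f i < m" and ne: "(\<Inter>j<m. convex hull (x ` {i. i < n \<and> f i = j})) \<inter> S \<noteq> {}"
    using assms(1) unfolding tverberg_prop_def by blast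
  define f' where "f' = (\<lambda>i. if i < n then f i else 0)"
  have "\<forall>i<n'. f' i < m" using f assms(3) by (simp add: f'_def)
  moreover have "{i. i < n \<and> f i = j} \<subseteq> {i. i < n' \<and> f' i = j}" for j using assms(2) by (auto simp: f'_def)
  then have "convex hull (x ` {i. i < n \<and> f i = j}) \<subseteq> convex hull (x ` {i. i < n' \<and> f' i = j})" for j
    by (intro hull_mono image_mono)
  then have "(\<Inter>j<m. convex hull (x ` {i. i < n \<and> f i = j})) \<inter> S \<subseteq> (\<Inter>j<m. convex hull (x ` {i. i < n' \<and> f' i = j})) \<inter> S"
    by blast
  ultimately show "\<exists>f. (\<forall>i<n'. f i < m) \<and> (\<Inter>j<m. convex hull (x ` {i. i < n' \<and> f i = j})) \<inter> S \<noteq> {}"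
    using ne by blast
qed

theorem mainTheorem6:
  fixes m :: nat
  assumes "m \<ge> 2"
  shows "Tv {p :: real \<times> (real ^ 'k). fst p \<in> \<int>} m = enat (2 * (m - 1) * (CARD('k) + 1) + 1)"
proof -
  define S where "S = {p :: real \<times> (real ^ 'k). fst p \<in> \<int>}"
  define n0 where "n0 = 2 * (m - 1) * (CARD('k) + 1)"
  have up: "tverberg_prop S m (n0 + 1)" using upper_bound[OF assms] by (simp add: S_def n0_def)
  have low: "\<not> tverberg_prop S m n0" using lower_bound[OF assms] by (simp add: S_def n0_def)
  have "(LEAST n. n > 0 \<and> tverberg_prop S m n) = n0 + 1"
  proof (rule Least_equality)
    show "n0 + 1 > 0 \<and> tverberg_prop S m (n0 + 1)" using up by simp
  next
    fix n assume "n > 0 \<and> tverberg_prop S m n"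
    then have pn: "tverberg_prop S m n" by simp
    show "n0 + 1 \<le> n"
    proof (rule ccontr)
      assume "\<not> n0 + 1 \<le> n"
      then have "n \<le> n0" by simp
      moreover have "m > 0" using assms by simp
      ultimately have "tverberg_prop S m n0" using tv_mono[OF pn] by blast
      then show False using low by simp
    qed
  qed
  then show ?thesis using up unfolding Tv_def S_def n0_def by auto
qed

end
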